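(* Let $N\geq 1$, let $\alpha,\beta\in\mathbb{R}$, and let $a_1,\dots,a_N\in[0,2\pi)$. For each $i$ let $\Omega_i^*=\frac1N\sum_{j=1}^N\sin(a_i-a_j+\alpha)\sin(a_i-a_j+\beta)$. Consider the layer equation (the system at $\varepsilon=0$) \[ \dot\psi_i = -\Omega_i^*+\frac{1}{N}\sum_{j=1}^N\sin(a_i-a_j+\beta)\sin(\psi_i+a_i-\psi_j-a_j+\alpha)-\frac{1}{N}\sum_{j=1}^N\sigma_{ij}\sin(\psi_i+a_i-\psi_j-a_j+\alpha),\qquad \dot\sigma_{ij}=0, \] for $i,j=1,\ldots,N$, of the slow-fast system obtained by adding $\dot\sigma_{ij}=-\varepsilon\big(\sin(\psi_i+a_i-\psi_j-a_j+\beta)-\sin(a_i-a_j+\beta)+\sigma_{ij}\big)$. Then the equilibrium point $(\psi_i,\sigma_{ij})=(0,0)$ of the layer equation is non-hyperbolic. In particular, the antipodal solution, corresponding to $a_i\in\{0,\pi\}$ for all $i$, is nilpotent for $\beta=0$.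
   Context: This system arises from the adaptive Kuramoto network $\dot\phi_i=-\frac1N\sum_j\kappa_{ij}\sin(\phi_i-\phi_j+\alpha)$, $\dot\kappa_{ij}=-\varepsilon(\sin(\phi_i-\phi_j+\beta)+\kappa_{ij})$ via the co-rotating coordinates $\psi_i=\phi_i-(\Omega^*t+a_i)$ and shifted weights $\sigma_{ij}=\kappa_{ij}+\sin(a_i-a_j+\beta)$. An equilibrium is non-hyperbolic if its Jacobian has an eigenvalue with zero real part, and nilpotent if all eigenvalues of its Jacobian are zero. *)

theory Defs
  imports "HOL-Analysis.Derivative" "Jordan_Normal_Form.Char_Poly"
begin

text \<open>The state is the flattened real vector of dimension N + N*N:
  entry i (i < N) is psi_i, entry N + i*N + j (i,j < N) is sigma_ij.
  Indices run over 0..N-1 instead of 1..N.\<close>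

definition Omega_star :: "nat \<Rightarrow> real \<Rightarrow> real \<Rightarrow> (nat \<Rightarrow> real) \<Rightarrow> nat \<Rightarrow> real" where
  "Omega_star N \<alpha> \<beta> a i =
     (1 / real N) * (\<Sum>j<N. sin (a i - a j + \<alpha>) * sin (a i - a j + \<beta>))"

definition sig_idx :: "nat \<Rightarrow> nat \<Rightarrow> nat \<Rightarrow> nat" where
  "sig_idx N i j = N + i * N + j"

definition state_dim :: "nat \<Rightarrow> nat" where
  "state_dim N = N + N * N"

definition layer_field :: "nat \<Rightarrow> real \<Rightarrow> real \<Rightarrow> (nat \<Rightarrow> real) \<Rightarrow> real vec \<Rightarrow> real vec" where
  "layer_field N \<alpha> \<beta> a x = vec (state_dim N) (\<lambda>r.
     if r < N then
       - Omega_star N \<alpha> \<beta> a r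
       + (1 / real N) * (\<Sum>j<N. sin (a r - a j + \<beta>) * sin (x $ r + a r - x $ j - a j + \<alpha>))
       - (1 / real N) * (\<Sum>j<N. x $ sig_idx N r j * sin (x $ r + a r - x $ j - a j + \<alpha>))
     else 0)"

definition layer_jacobian :: "nat \<Rightarrow> real \<Rightarrow> real \<Rightarrow> (nat \<Rightarrow> real) \<Rightarrow> real vec \<Rightarrow> real mat" where
  "layer_jacobian N \<alpha> \<beta> a x0 = mat (state_dim N) (state_dim N) (\<lambda>(r, c).
     deriv (\<lambda>t. layer_field N \<alpha> \<beta> a (x0 + t \<cdot>\<^sub>v unit_vec (state_dim N) c) $ r) 0)"

definition non_hyperbolic :: "real mat \<Rightarrow> bool" where
  "non_hyperbolic J \<longleftrightarrow> (\<exists>z. eigenvalue (map_mat complex_of_real J) z \<and> Re z = 0)"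

definition nilpotent_eq :: "real mat \<Rightarrow> bool" where
  "nilpotent_eq J \<longleftrightarrow> (\<forall>z. eigenvalue (map_mat complex_of_real J) z \<longrightarrow> z = 0)"

end

theory Submission
  imports Defs
begin

lemma det_zero_row_gen:
  assumes A: "(A :: 'a :: comm_ring_1 mat) \<in> carrier_mat n n" and k: "k < n"
    and z: "\<And>j. j < n \<Longrightarrow> A $$ (k, j) = 0"
  shows "det A = 0"
proof -
  have "\<And>p. p permutes {0..<n} \<Longrightarrow> (\<Prod>i = 0 ..< dim_row A. A $$ (i, p i)) = 0"
  proof -
    fix p assume p: "p permutes {0..<n}"
    have "p k < n" using p k by (meson atLeastLessThan_iff permutes_in_image zero_le)
    then show "(\<Prod>i = 0 ..< dim_row A. A $$ (i, p i)) = 0"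
      using A k z by (intro prod_zero[OF _ bexI[of _ k]]) auto
  qed
  then show ?thesis using A by (simp add: det_def')
qed

lemma vec_comp:
  assumes "k < n" shows "(0\<^sub>v n + t \<cdot>\<^sub>v unit_vec n c) $ k = (if k = c then t else (0::real))"
  using assms by (simp add: unit_vec_def)

lemma field_comp:
  assumes "r < state_dim N"
  shows "layer_field N \<alpha> \<beta> a x $ r = (if r < N then
       - Omega_star N \<alpha> \<beta> a r
       + (1 / real N) * (\<Sum>j<N. sin (a r - a j + \<beta>) * sin (x $ r + a r - x $ j - a j + \<alpha>))
       - (1 / real N) * (\<Sum>j<N. x $ sig_idx N r j * sin (x $ r + a r - x $ j - a j + \<alpha>))
     else 0)"
  using assms unfolding layer_field_def by simp

lemma jac_entry:
  assumes "r < state_dim N" "c < state_dim N"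
  shows "layer_jacobian N \<alpha> \<beta> a x0 $$ (r, c) =
     deriv (\<lambda>t. layer_field N \<alpha> \<beta> a (x0 + t \<cdot>\<^sub>v unit_vec (state_dim N) c) $ r) 0"
  using assms unfolding layer_jacobian_def by simp

lemma jac_low:
  assumes "r < state_dim N" "c < state_dim N" "\<not> r < N"
  shows "layer_jacobian N \<alpha> \<beta> a x0 $$ (r, c) = 0"
  using assms by (simp add: jac_entry field_comp)


lemma sig_lt:
  fixes r N j :: nat
  assumes "r < N" "j < N" shows "N + r * N + j < N + N * N"
proof -
  have "r * N + j < r * N + N" using assms(2) by linarith
  also have "\<dots> = Suc r * N" by simp
  also have "\<dots> \<le> N * N" using assms(1) by (intro mult_le_mono1) simp
  finally show ?thesis by simp
qed

lemma sin_diff_zero: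
  assumes "x \<in> {0, pi}" "y \<in> {0, pi}"
  shows "sin (x - y + 0) = 0"
  using assms by auto

theorem proposition4:
  fixes N :: nat and \<alpha> \<beta> :: real and a :: "nat \<Rightarrow> real"
  assumes "N \<ge> 1"
    and "\<forall>i<N. 0 \<le> a i \<and> a i < 2 * pi"
  shows "layer_field N \<alpha> \<beta> a (0\<^sub>v (state_dim N)) = 0\<^sub>v (state_dim N)
    \<and> non_hyperbolic (layer_jacobian N \<alpha> \<beta> a (0\<^sub>v (state_dim N)))
    \<and> ((\<forall>i<N. a i \<in> {0, pi}) \<and> \<beta> = 0 \<longrightarrow>
         nilpotent_eq (layer_jacobian N \<alpha> \<beta> a (0\<^sub>v (state_dim N))))"
proof (intro conjI impI)
  define n where "n = state_dim N"
  define J where "J = layer_jacobian N \<alpha> \<beta> a (0\<^sub>v n)"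
  define M where "M = map_mat complex_of_real J"
  have Nn: "N < n" using assms(1) unfolding n_def state_dim_def by simp
  have Jc: "J \<in> carrier_mat n n" unfolding J_def layer_jacobian_def n_def by simp
  have Mc: "M \<in> carrier_mat n n" using Jc unfolding M_def by simp
  have Mlow: "M $$ (r, c) = 0" if "r < n" "c < n" "\<not> r < N" for r c
    using that Jc jac_low[of r N c \<alpha> \<beta> a "0\<^sub>v n"] unfolding M_def J_def n_def by simp
  show "layer_field N \<alpha> \<beta> a (0\<^sub>v (state_dim N)) = 0\<^sub>v (state_dim N)"
  proof (rule eq_vecI)
    fix r assume r: "r < dim_vec (0\<^sub>v (state_dim N) :: real vec)"
    then have r': "r < state_dim N" by simp
    have s: "sig_idx N r j < state_dim N" if "r < N" "j < N" for j
      using that unfolding sig_idx_def state_dim_def by (rule sig_lt)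
    show "layer_field N \<alpha> \<beta> a (0\<^sub>v (state_dim N)) $ r = 0\<^sub>v (state_dim N) $ r"
    proof (cases "r < N")
      case True
      have "(\<Sum>j<N. sin (a r - a j + \<beta>) * sin ((0\<^sub>v (state_dim N)) $ r + a r - (0\<^sub>v (state_dim N)) $ j - a j + \<alpha>))
          = (\<Sum>j<N. sin (a r - a j + \<alpha>) * sin (a r - a j + \<beta>))"
        using True r' Nn unfolding n_def
        by (intro sum.cong) (auto simp: mult.commute)
      moreover have "(\<Sum>j<N. (0\<^sub>v (state_dim N)) $ sig_idx N r j * sin ((0\<^sub>v (state_dim N)) $ r + a r - (0\<^sub>v (state_dim N)) $ j - a j + \<alpha>)) = 0"
        using True s by (intro sum.neutral) simp
      ultimately show ?thesis using True r' by (simp add: field_comp Omega_star_def)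
    next
      case False then show ?thesis using r' by (simp add: field_comp)
    qed
  next
    show "dim_vec (layer_field N \<alpha> \<beta> a (0\<^sub>v (state_dim N))) = dim_vec (0\<^sub>v (state_dim N) :: real vec)"
      unfolding layer_field_def by simp
  qed
  show "non_hyperbolic (layer_jacobian N \<alpha> \<beta> a (0\<^sub>v (state_dim N)))"
  proof -
    have "det M = 0" by (rule det_zero_row_gen[OF Mc Nn]) (use Mlow Nn in auto)
    then obtain v where v: "v \<in> carrier_vec n" "v \<noteq> 0\<^sub>v n" "M *\<^sub>v v = 0\<^sub>v n"
      using det_0_iff_vec_prod_zero[OF Mc] by auto
    have "eigenvector M v 0" unfolding eigenvector_def using v Mc by auto
    then have "eigenvalue M 0" unfolding eigenvalue_def by auto
    then show ?thesis unfolding non_hyperbolic_def M_def J_def n_def by auto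
  qed
  assume H: "(\<forall>i<N. a i \<in> {0, pi}) \<and> \<beta> = 0"
  have Mtop: "M $$ (r, c) = 0" if "r < N" "c < N" for r c
  proof -
    have rn: "r < n" "c < n" using that Nn by auto
    have sg: "sig_idx N r j \<noteq> c" for j using that unfolding sig_idx_def by auto
    have sg2: "sig_idx N r j < n" if "j < N" for j
      using \<open>r < N\<close> that unfolding sig_idx_def n_def state_dim_def by (rule sig_lt)
    have "(\<lambda>t. layer_field N \<alpha> \<beta> a (0\<^sub>v n + t \<cdot>\<^sub>v unit_vec n c) $ r) = (\<lambda>t. 0)"
    proof
      fix t
      have sz: "sin (a r - a j + \<beta>) = 0" if "j < N" for j
        using H \<open>r < N\<close> that sin_diff_zero[of "a r" "a j"] by simp
      have "(\<Sum>j<N. sin (a r - a j + \<alpha>) * sin (a r - a j + \<beta>)) = 0"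
        by (rule sum.neutral) (simp add: sz)
      then have O: "Omega_star N \<alpha> \<beta> a r = 0" unfolding Omega_star_def by simp
      have A1: "(\<Sum>j<N. sin (a r - a j + \<beta>) * sin ((0\<^sub>v n + t \<cdot>\<^sub>v unit_vec n c) $ r + a r - (0\<^sub>v n + t \<cdot>\<^sub>v unit_vec n c) $ j - a j + \<alpha>)) = 0"
        by (rule sum.neutral) (simp add: sz)
      have A2: "(\<Sum>j<N. (0\<^sub>v n + t \<cdot>\<^sub>v unit_vec n c) $ sig_idx N r j * sin ((0\<^sub>v n + t \<cdot>\<^sub>v unit_vec n c) $ r + a r - (0\<^sub>v n + t \<cdot>\<^sub>v unit_vec n c) $ j - a j + \<alpha>)) = 0"
      proof (rule sum.neutral, intro ballI)
        fix j assume "j \<in> {..<N}"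
        then have "(0\<^sub>v n + t \<cdot>\<^sub>v unit_vec n c) $ sig_idx N r j = 0"
          using vec_comp[OF sg2[of j], of t c] sg[of j] by simp
        then show "(0\<^sub>v n + t \<cdot>\<^sub>v unit_vec n c) $ sig_idx N r j * sin ((0\<^sub>v n + t \<cdot>\<^sub>v unit_vec n c) $ r + a r - (0\<^sub>v n + t \<cdot>\<^sub>v unit_vec n c) $ j - a j + \<alpha>) = 0"
          by simp
      qed
      show "layer_field N \<alpha> \<beta> a (0\<^sub>v n + t \<cdot>\<^sub>v unit_vec n c) $ r = 0"
        using rn that O A1 A2 unfolding n_def by (simp only: field_comp) simp
    qed
    then show ?thesis using rn Jc jac_entry[of r N c \<alpha> \<beta> a "0\<^sub>v n"]
      unfolding M_def J_def n_def by simp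
  qed
  show "nilpotent_eq (layer_jacobian N \<alpha> \<beta> a (0\<^sub>v (state_dim N)))"
    unfolding nilpotent_eq_def
  proof (intro allI impI)
    fix z assume "eigenvalue (map_mat complex_of_real (layer_jacobian N \<alpha> \<beta> a (0\<^sub>v (state_dim N)))) z"
    then obtain v where ev: "eigenvector M v z" unfolding eigenvalue_def M_def J_def n_def by auto
    then have v: "v \<in> carrier_vec n" "v \<noteq> 0\<^sub>v n" "M *\<^sub>v v = z \<cdot>\<^sub>v v"
      unfolding eigenvector_def using Mc by auto
    show "z = 0"
    proof (rule ccontr)
      assume z: "z \<noteq> 0"
      have comp: "(M *\<^sub>v v) $ r = (\<Sum>c<n. M $$ (r, c) * v $ c)" if "r < n" for r
        using that Mc v(1) by (simp add: mult_mat_vec_def scalar_prod_def atLeast0LessThan)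
      have low: "v $ r = 0" if "r < n" "\<not> r < N" for r
      proof -
        have "z * v $ r = (M *\<^sub>v v) $ r" using v(3) v(1) that by simp
        also have "\<dots> = 0" using comp[OF that(1)] Mlow that by simp
        finally show ?thesis using z by simp
      qed
      have top: "v $ r = 0" if "r < N" for r
      proof -
        have rn: "r < n" using that Nn by simp
        have "z * v $ r = (M *\<^sub>v v) $ r" using v(3) v(1) rn by simp
        also have "\<dots> = 0" unfolding comp[OF rn]
          by (intro sum.neutral) (use Mtop low that in auto)
        finally show ?thesis using z by simp
      qed
      have "v = 0\<^sub>v n"
        by (rule eq_vecI) (use v(1) low top in \<open>auto\<close>)
      then show False using v(2) by simp
    qed
  qed
qed

end
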